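(* Let $G_0$ be a connected graph with a vertex $x$ such that $d_{G_0}(x)\in\{1,2\}$. Let $P_1=u_1u_2\cdots u_k$ ($k\ge1$) and $P_2=v_1v_2\cdots v_l$ ($l\ge1$) be paths, vertex-disjoint from each other and from $G_0$. Let $G_1$ be the graph obtained from the disjoint union of $G_0,P_1,P_2$ by adding the edges $u_1x$ and $v_1x$, and let $G_2=G_1-u_1x+u_1v_l$. Then $SO(G_1)>SO(G_2)$ and $SO_{red}(G_1)>SO_{red}(G_2)$.
   Context: $d_G(u)$ denotes the degree of $u$ in $G$. $SO(G)=\sum_{uv\in E(G)}\sqrt{d_G(u)^2+d_G(v)^2}$ and $SO_{red}(G)=\sum_{uv\in E(G)}\sqrt{(d_G(u)-1)^2+(d_G(v)-1)^2}$. *)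

theory Defs
  imports Complex_Main
begin

definition simple_graph :: "'a set \<Rightarrow> 'a set set \<Rightarrow> bool" where
  "simple_graph V E \<longleftrightarrow> finite V \<and> (\<forall>e\<in>E. e \<subseteq> V \<and> card e = 2)"

definition degree :: "'a set set \<Rightarrow> 'a \<Rightarrow> nat" where
  "degree E u = card {e\<in>E. u \<in> e}"

definition connected_graph :: "'a set \<Rightarrow> 'a set set \<Rightarrow> bool" where
  "connected_graph V E \<longleftrightarrow> V \<noteq> {} \<and>
     (\<forall>a\<in>V. \<forall>b\<in>V. \<exists>p::'a list. p \<noteq> [] \<and> hd p = a \<and> last p = b \<and>
        set p \<subseteq> V \<and> (\<forall>i. Suc i < length p \<longrightarrow> {p ! i, p ! Suc i} \<in> E))"

text \<open>Sombor index and reduced Sombor index; for an edge e = {u,v} the sum over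
  w in e of d(w)^2 is d(u)^2 + d(v)^2.\<close>
definition SO :: "'a set set \<Rightarrow> real" where
  "SO E = (\<Sum>e\<in>E. sqrt (\<Sum>w\<in>e. (real (degree E w))\<^sup>2))"

definition SO_red :: "'a set set \<Rightarrow> real" where
  "SO_red E = (\<Sum>e\<in>E. sqrt (\<Sum>w\<in>e. (real (degree E w) - 1)\<^sup>2))"

definition path_edges :: "(nat \<Rightarrow> 'a) \<Rightarrow> nat \<Rightarrow> 'a set set" where
  "path_edges w n = {{w i, w (Suc i)} | i. 1 \<le> i \<and> i < n}"

end

theory Submission
  imports Defs
begin

lemma path_edges_img: "path_edges w n = (\<lambda>i. {w i, w (Suc i)}) ` {1..<n}"
  unfolding path_edges_def by auto

lemma finite_path_edges: "finite (path_edges w n)"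
  unfolding path_edges_img by simp

lemma path_edges_notin:
  assumes "z \<notin> w ` {1..n}"
  shows "{e\<in>path_edges w n. z \<in> e} = {}"
  using assms unfolding path_edges_def by force

lemma path_edges_at:
  assumes inj: "inj_on w {1..n}" and m: "m \<in> {1..n}"
  shows "{e\<in>path_edges w n. w m \<in> e} =
    (if 1 < m then {{w (m-1), w m}} else {}) \<union> (if m < n then {{w m, w (Suc m)}} else {})"
proof (rule set_eqI, rule iffI)
  fix e assume "e \<in> {e\<in>path_edges w n. w m \<in> e}"
  then obtain i where i: "1 \<le> i" "i < n" "e = {w i, w (Suc i)}" "w m \<in> e"
    unfolding path_edges_def by blast
  then have "w m = w i \<or> w m = w (Suc i)" by auto
  then have "m = i \<or> m = Suc i"
    using inj m i by (auto dest: inj_onD)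
  then show "e \<in> (if 1 < m then {{w (m-1), w m}} else {}) \<union> (if m < n then {{w m, w (Suc m)}} else {})"
    using i by auto
next
  fix e assume e: "e \<in> (if 1 < m then {{w (m-1), w m}} else {}) \<union> (if m < n then {{w m, w (Suc m)}} else {})"
  show "e \<in> {e\<in>path_edges w n. w m \<in> e}"
  proof (cases "1 < m \<and> e = {w (m-1), w m}")
    case True
    then have "e = {w (m-1), w (Suc (m-1))}" by simp
    then show ?thesis using True m unfolding path_edges_def by force
  next
    case False
    then have "m < n" "e = {w m, w (Suc m)}" using e by (auto split: if_splits)
    then show ?thesis using m unfolding path_edges_def by force
  qed
qed

lemma deg_pos:
  assumes "finite E" "e \<in> E" "w \<in> e"
  shows "degree E w \<ge> 1"
proof -
  have "finite {e\<in>E. w \<in> e}" using assms by simp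
  moreover have "e \<in> {e\<in>E. w \<in> e}" using assms by simp
  ultimately have "card {e\<in>E. w \<in> e} > 0" by (auto simp: card_gt_0_iff)
  then show ?thesis unfolding degree_def by simp
qed

lemma deg_switch:
  assumes fin: "finite E" and e0: "e0 \<in> E" and e0': "e0' \<notin> E"
  shows "degree ((E - {e0}) \<union> {e0'}) z =
     degree E z - (if z \<in> e0 then 1 else 0) + (if z \<in> e0' then 1 else 0)"
proof -
  let ?N = "{e\<in>E. z \<in> e}"
  have finN: "finite ?N" using fin by simp
  have A: "{e\<in>(E - {e0}) \<union> {e0'}. z \<in> e} = (?N - {e0}) \<union> (if z \<in> e0' then {e0'} else {})"
    by auto
  have B: "card (?N - {e0}) = card ?N - (if z \<in> e0 then 1 else 0)"
    using finN e0 by (auto simp: card_Diff_singleton)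
  have C: "e0' \<notin> ?N - {e0}" using e0' by simp
  show ?thesis unfolding degree_def A
    using B C finN by (auto simp: card_insert_if)
qed

lemma switch_sum:
  fixes g1 g2 :: "'a \<Rightarrow> real"
  assumes fin: "finite E" and "e0 \<in> E" "e0' \<notin> E" "ev \<in> E" "ev \<noteq> e0"
    and mono: "\<forall>e\<in>E-{e0,ev}. g2 e \<le> g1 e"
    and key: "g2 e0' + g2 ev < g1 e0 + g1 ev"
  shows "sum g2 ((E-{e0}) \<union> {e0'}) < sum g1 E"
proof -
  have 1: "sum g1 E = g1 e0 + g1 ev + sum g1 (E - {e0,ev})"
    using assms by (simp add: sum.remove[of E e0] sum.remove[of "E-{e0}" ev] Diff_insert2[symmetric] insert_commute)
  have 2: "sum g2 ((E-{e0}) \<union> {e0'}) = g2 e0' + g2 ev + sum g2 (E - {e0,ev})"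
  proof -
    have "(E-{e0}) \<union> {e0'} = insert e0' (E - {e0})" by auto
    then have "sum g2 ((E-{e0}) \<union> {e0'}) = g2 e0' + sum g2 (E - {e0})"
      using assms by simp
    also have "sum g2 (E - {e0}) = g2 ev + sum g2 (E - {e0} - {ev})"
      using assms by (simp add: sum.remove)
    also have "E - {e0} - {ev} = E - {e0,ev}" by auto
    finally show ?thesis by simp
  qed
  have 3: "sum g2 (E - {e0,ev}) \<le> sum g1 (E - {e0,ev})"
    using mono by (intro sum_mono) auto
  show ?thesis using 1 2 3 key by linarith
qed

lemma sq_ge: fixes D c :: real assumes "c \<ge> 0" "D \<ge> c" shows "D\<^sup>2 \<ge> c\<^sup>2"
  using assms by (simp add: power_mono)

lemma num_SO_1:
  fixes A D :: real assumes "A \<ge> 1" "D \<ge> 3"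
  shows "sqrt (A\<^sup>2 + 2\<^sup>2) + sqrt (2\<^sup>2 + (D-1)\<^sup>2) < sqrt (A\<^sup>2 + D\<^sup>2) + sqrt (1\<^sup>2 + D\<^sup>2)"
proof -
  have "D\<^sup>2 \<ge> 3\<^sup>2" using sq_ge[of 3 D] assms by simp
  then have "A\<^sup>2 + 2\<^sup>2 < A\<^sup>2 + D\<^sup>2" by simp
  moreover have "2\<^sup>2 + (D-1)\<^sup>2 < 1\<^sup>2 + D\<^sup>2" using assms by (simp add: power2_eq_square algebra_simps)
  ultimately show ?thesis by (meson add_strict_mono real_sqrt_less_iff)
qed

lemma s8: "sqrt 8 \<le> (283/100::real)"
proof -
  have "sqrt 8 \<le> sqrt ((283/100)\<^sup>2::real)" by (intro real_sqrt_le_mono) (simp add: power2_eq_square)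
  then show ?thesis by simp
qed

lemma s2: "sqrt 2 \<le> (142/100::real)"
proof -
  have "sqrt 2 \<le> sqrt ((142/100)\<^sup>2::real)" by (intro real_sqrt_le_mono) (simp add: power2_eq_square)
  then show ?thesis by simp
qed

lemma num_SO_2:
  fixes A D :: real assumes "A = 1 \<or> A = 2" "D \<ge> 3"
  shows "sqrt (A\<^sup>2 + 2\<^sup>2) + sqrt (2\<^sup>2 + 2\<^sup>2) < sqrt (A\<^sup>2 + D\<^sup>2) + sqrt (2\<^sup>2 + 1\<^sup>2)"
proof -
  have "D\<^sup>2 \<ge> 3\<^sup>2" using sq_ge[of 3 D] assms by simp
  then have m: "sqrt (A\<^sup>2 + 3\<^sup>2) \<le> sqrt (A\<^sup>2 + D\<^sup>2)" by simp
  have s13: "(36/10::real) \<le> sqrt 13" by (rule real_le_rsqrt) (simp add: power2_eq_square)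
  have s10: "(31/10::real) \<le> sqrt 10" by (rule real_le_rsqrt) (simp add: power2_eq_square)
  have s5: "(223/100::real) \<le> sqrt 5" by (rule real_le_rsqrt) (simp add: power2_eq_square)
  show ?thesis using assms(1)
  proof
    assume "A = 1" then show ?thesis using m s10 s8 s5 by (simp add: power2_eq_square)
  next
    assume a: "A = 2"
    have "sqrt 13 \<le> sqrt (A\<^sup>2 + D\<^sup>2)" using m a by simp
    moreover have "sqrt (A\<^sup>2 + 2\<^sup>2) = sqrt 8" "sqrt (2\<^sup>2 + 2\<^sup>2) = (sqrt 8::real)" "sqrt (2\<^sup>2 + 1\<^sup>2) = (sqrt 5::real)"
      using a by simp_all
    ultimately show ?thesis using s13 s8 s5 by linarith
  qed
qed

lemma num_red_1:
  fixes A D :: real assumes "A \<ge> 0" "D \<ge> 3"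
  shows "sqrt (A\<^sup>2 + 1\<^sup>2) + sqrt (1\<^sup>2 + (D-2)\<^sup>2) < sqrt (A\<^sup>2 + (D-1)\<^sup>2) + sqrt (0\<^sup>2 + (D-1)\<^sup>2)"
proof -
  have "(D-1)\<^sup>2 \<ge> 2\<^sup>2" using sq_ge[of 2 "D-1"] assms by simp
  then have "A\<^sup>2 + 1\<^sup>2 < A\<^sup>2 + (D-1)\<^sup>2" by simp
  moreover have "1\<^sup>2 + (D-2)\<^sup>2 < 0\<^sup>2 + (D-1)\<^sup>2" using assms by (simp add: power2_eq_square algebra_simps)
  ultimately show ?thesis by (meson add_strict_mono real_sqrt_less_iff)
qed

lemma num_red_2:
  fixes A D :: real assumes "A = 0 \<or> A = 1" "D \<ge> 3"
  shows "sqrt (A\<^sup>2 + 1\<^sup>2) + sqrt (1\<^sup>2 + 1\<^sup>2) < sqrt (A\<^sup>2 + (D-1)\<^sup>2) + sqrt (1\<^sup>2 + 0\<^sup>2)"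
proof -
  have "(D-1)\<^sup>2 \<ge> 2\<^sup>2" using sq_ge[of 2 "D-1"] assms by simp
  then have m: "sqrt (A\<^sup>2 + 2\<^sup>2) \<le> sqrt (A\<^sup>2 + (D-1)\<^sup>2)" by simp
  have s5: "(223/100::real) \<le> sqrt 5" by (rule real_le_rsqrt) (simp add: power2_eq_square)
  show ?thesis using assms(1)
  proof
    assume "A = 0" then show ?thesis using m s2 by (simp add: power2_eq_square)
  next
    assume a: "A = 1"
    have "sqrt 5 \<le> sqrt (A\<^sup>2 + (D-1)\<^sup>2)" using m a by simp
    moreover have "sqrt (A\<^sup>2 + 1\<^sup>2) = sqrt 2" "sqrt (1\<^sup>2 + 1\<^sup>2) = (sqrt 2::real)" "sqrt (1\<^sup>2 + 0\<^sup>2) = (1::real)"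
      using a by simp_all
    ultimately show ?thesis using s2 s5 by linarith
  qed
qed

theorem lemma2p3:
  fixes V0 :: "'a set" and E0 :: "'a set set" and x :: 'a
    and u v :: "nat \<Rightarrow> 'a" and k l :: nat
  assumes G0: "simple_graph V0 E0" "connected_graph V0 E0"
    and x: "x \<in> V0" "degree E0 x \<in> {1, 2}"
    and kl: "k \<ge> 1" "l \<ge> 1"
    and inj_u: "inj_on u {1..k}" and inj_v: "inj_on v {1..l}"
    and disj: "u ` {1..k} \<inter> v ` {1..l} = {}"
              "u ` {1..k} \<inter> V0 = {}" "v ` {1..l} \<inter> V0 = {}"
  defines "E1 \<equiv> E0 \<union> path_edges u k \<union> path_edges v l \<union> {{u 1, x}, {v 1, x}}"
  defines "E2 \<equiv> (E1 - {{u 1, x}}) \<union> {{u 1, v l}}"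
  shows "SO E1 > SO E2 \<and> SO_red E1 > SO_red E2"
proof -
  define d1 where "d1 = degree E1"
  define d2 where "d2 = degree E2"
  define e0 where "e0 = {u 1, x}"
  define e0' where "e0' = {u 1, v l}"
  define ev where "ev = (if l = 1 then {v 1, x} else {v (l-1), v l})"
  from G0(1) have finV0: "finite V0" and Esub: "\<And>e. e \<in> E0 \<Longrightarrow> e \<subseteq> V0"
    by (auto simp: simple_graph_def)
  have finE0: "finite E0"
    by (rule finite_subset[of _ "Pow V0"]) (use Esub finV0 in auto)
  have finE1: "finite E1" unfolding E1_def using finE0 by (simp add: finite_path_edges)
  have E0z: "\<And>z. z \<notin> V0 \<Longrightarrow> {e\<in>E0. z\<in>e} = {}" using Esub by auto
  have N1: "\<And>z. {e\<in>E1. z\<in>e} = {e\<in>E0. z\<in>e} \<union> {e\<in>path_edges u k. z\<in>e} \<union> {e\<in>path_edges v l. z\<in>e}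
      \<union> {e\<in>{{u 1,x},{v 1,x}}. z\<in>e}" unfolding E1_def by auto
  have uin: "\<And>i. i\<in>{1..k} \<Longrightarrow> u i \<notin> V0 \<and> u i \<notin> v`{1..l}" using disj by blast
  have vin: "\<And>j. j\<in>{1..l} \<Longrightarrow> v j \<notin> V0 \<and> v j \<notin> u`{1..k}" using disj by blast
  have xnu: "x \<notin> u`{1..k}" "x \<notin> v`{1..l}" using disj x(1) by auto
  have i1k: "1 \<in> {1..k}" and i1l: "1 \<in> {1..l}" and ill: "l \<in> {1..l}" using kl by auto
  have neq: "u 1 \<noteq> x" "v 1 \<noteq> x" "v l \<noteq> x" "u 1 \<noteq> v l" "u 1 \<noteq> v 1"
  proof -
    show "u 1 \<noteq> x" "v 1 \<noteq> x" "v l \<noteq> x" using uin[OF i1k] vin[OF i1l] vin[OF ill] x(1) by auto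
    have "v l \<in> v`{1..l}" "v 1 \<in> v`{1..l}" using i1l ill by auto
    then show "u 1 \<noteq> v l" "u 1 \<noteq> v 1" using uin[OF i1k] by force+
  qed

  have Nx: "{e\<in>E1. x\<in>e} = {e\<in>E0. x\<in>e} \<union> {{u 1,x},{v 1,x}}"
    unfolding N1 using path_edges_notin[OF xnu(1)] path_edges_notin[OF xnu(2)] by auto
  have "{u 1, x} \<notin> E0" "{v 1, x} \<notin> E0" using Esub uin[OF i1k] vin[OF i1l] by auto
  then have dj: "{e\<in>E0. x\<in>e} \<inter> {{u 1,x},{v 1,x}} = {}" by auto
  have c2: "card {{u 1,x},{v 1,x}} = 2" using neq by (simp add: doubleton_eq_iff)
  have d1x: "d1 x = degree E0 x + 2"
    unfolding d1_def degree_def Nx using card_Un_disjoint[OF _ _ dj] finE0 c2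
    by (simp add: degree_def)

  have Nu: "{e\<in>E1. u 1\<in>e} = (if 1 < k then {{u 1, u 2}} else {}) \<union> {{u 1, x}}"
  proof -
    have a: "{e\<in>E0. u 1\<in>e} = {}" using E0z uin[OF i1k] by blast
    have b: "{e\<in>path_edges v l. u 1\<in>e} = {}" using path_edges_notin[of "u 1" v l] uin[OF i1k] by blast
    have c: "{e\<in>path_edges u k. u 1\<in>e} = (if 1 < k then {{u 1, u 2}} else {})"
      using path_edges_at[OF inj_u i1k] by (simp add: numeral_2_eq_2)
    have d: "{e\<in>{{u 1,x},{v 1,x}}. u 1\<in>e} = {{u 1, x}}" using neq by auto
    show ?thesis unfolding N1 a b c d by simp
  qed
  have d1u: "d1 (u 1) = 1 \<or> d1 (u 1) = 2"
  proof (cases "1 < k")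
    case True
    then have "2 \<in> {1..k}" by auto
    then have "u 2 \<noteq> x" using xnu by auto
    then show ?thesis using True unfolding d1_def degree_def Nu by (simp add: doubleton_eq_iff)
  next
    case False
    then show ?thesis unfolding d1_def degree_def Nu by simp
  qed

  have Nv: "{e\<in>E1. v l\<in>e} = {ev}"
  proof -
    have a: "{e\<in>E0. v l\<in>e} = {}" using E0z vin[OF ill] by blast
    have b: "{e\<in>path_edges u k. v l\<in>e} = {}" using path_edges_notin[of "v l" u k] vin[OF ill] by blast
    have c: "{e\<in>path_edges v l. v l\<in>e} = (if 1 < l then {{v (l-1), v l}} else {})"
      using path_edges_at[OF inj_v ill] by simp
    show ?thesis
    proof (cases "l = 1")
      case True
      have d: "{e\<in>{{u 1,x},{v 1,x}}. v l\<in>e} = {{v 1, x}}" using neq True by auto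
      show ?thesis unfolding N1 a b c d ev_def using True by simp
    next
      case False
      have "v l \<noteq> v 1" using False inj_v i1l ill by (auto dest: inj_onD)
      then have d: "{e\<in>{{u 1,x},{v 1,x}}. v l\<in>e} = {}" using neq by auto
      show ?thesis unfolding N1 a b c d ev_def using False kl by simp
    qed
  qed
  have d1vl: "d1 (v l) = 1" unfolding d1_def degree_def Nv by simp
  have ev1: "ev \<in> E1" "v l \<in> ev" using Nv by auto
  have e0E: "e0 \<in> E1" unfolding e0_def E1_def by simp
  have e0'E: "e0' \<notin> E1"
  proof
    assume "e0' \<in> E1"
    then have "e0' \<in> {e\<in>E1. v l\<in>e}" unfolding e0'_def by simp
    then have h: "e0' = ev" unfolding Nv by simp
    show False
    proof (cases "l = 1")
      case True
      then show False using h neq unfolding e0'_def ev_def by (simp add: doubleton_eq_iff)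
    next
      case False
      then have "l - 1 \<in> {1..l}" using kl by auto
      then have "v (l-1) \<in> v`{1..l}" by (rule imageI)
      then have "u 1 \<noteq> v (l-1)" using uin[OF i1k] by metis
      then show False using h neq False unfolding e0'_def ev_def by (simp add: doubleton_eq_iff)
    qed
  qed
  have eve0: "ev \<noteq> e0" using ev1 neq unfolding e0_def by auto
  have finE2: "finite E2" unfolding E2_def using finE1 by simp
  have d2f: "\<And>z. d2 z = d1 z - (if z \<in> e0 then 1 else 0) + (if z \<in> e0' then 1 else 0)"
    unfolding d1_def d2_def E2_def e0_def[symmetric] e0'_def[symmetric]
    by (rule deg_switch[OF finE1 e0E e0'E])
  have d2x: "d2 x = d1 x - 1" using d2f[of x] neq unfolding e0_def e0'_def by auto
  have d2vl: "d2 (v l) = 2" using d2f[of "v l"] neq d1vl unfolding e0_def e0'_def by auto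
  have d2u: "d2 (u 1) = d1 (u 1)" using d2f[of "u 1"] d1u unfolding e0_def e0'_def by auto
  have mono_deg: "\<And>e w. e \<in> E1 - {e0, ev} \<Longrightarrow> w \<in> e \<Longrightarrow> 1 \<le> d2 w \<and> d2 w \<le> d1 w"
  proof -
    fix e w assume e: "e \<in> E1 - {e0, ev}" and w: "w \<in> e"
    have "w \<noteq> v l" using e w Nv by auto
    moreover have "1 \<le> d1 w" unfolding d1_def using deg_pos[OF finE1 _ w] e by auto
    moreover have "1 \<le> d2 w" unfolding d2_def using deg_pos[OF finE2 _ w] e unfolding E2_def e0_def by auto
    ultimately show "1 \<le> d2 w \<and> d2 w \<le> d1 w" using d2f[of w] unfolding e0_def e0'_def by auto
  qed
  have d1x3: "d1 x \<ge> 3" using d1x x(2) by auto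
  have d1u1: "d1 (u 1) \<ge> 1" using d1u by auto
  have rd2x: "real (d2 x) = real (d1 x) - 1" using d2x d1x3 by simp
  have g1e0: "(\<Sum>w\<in>e0. f (d1 w)) = f (d1 (u 1)) + f (d1 x)" for f :: "nat \<Rightarrow> real"
    unfolding e0_def using neq by simp
  have g2e0': "(\<Sum>w\<in>e0'. f (d2 w)) = f (d1 (u 1)) + f 2" for f :: "nat \<Rightarrow> real"
    unfolding e0'_def using neq d2u d2vl by simp
  have mono_SO: "\<forall>e\<in>E1-{e0,ev}. sqrt (\<Sum>w\<in>e. (real (d2 w))\<^sup>2) \<le> sqrt (\<Sum>w\<in>e. (real (d1 w))\<^sup>2)"
  proof (intro ballI real_sqrt_le_mono sum_mono)
    fix e w assume e: "e \<in> E1-{e0,ev}" "w \<in> e"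
    show "(real (d2 w))\<^sup>2 \<le> (real (d1 w))\<^sup>2" using mono_deg[OF e] by (simp add: power_mono)
  qed
  have mono_red: "\<forall>e\<in>E1-{e0,ev}. sqrt (\<Sum>w\<in>e. (real (d2 w) - 1)\<^sup>2) \<le> sqrt (\<Sum>w\<in>e. (real (d1 w) - 1)\<^sup>2)"
  proof (intro ballI real_sqrt_le_mono sum_mono)
    fix e w assume e: "e \<in> E1-{e0,ev}" "w \<in> e"
    show "(real (d2 w) - 1)\<^sup>2 \<le> (real (d1 w) - 1)\<^sup>2" using mono_deg[OF e] by (intro power_mono) auto
  qed
  have E2eq: "E2 = (E1-{e0}) \<union> {e0'}" unfolding E2_def e0_def e0'_def ..
  have SOeq: "SO E1 = (\<Sum>e\<in>E1. sqrt (\<Sum>w\<in>e. (real (d1 w))\<^sup>2))"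
    "SO E2 = (\<Sum>e\<in>(E1-{e0}) \<union> {e0'}. sqrt (\<Sum>w\<in>e. (real (d2 w))\<^sup>2))"
    "SO_red E1 = (\<Sum>e\<in>E1. sqrt (\<Sum>w\<in>e. (real (d1 w) - 1)\<^sup>2))"
    "SO_red E2 = (\<Sum>e\<in>(E1-{e0}) \<union> {e0'}. sqrt (\<Sum>w\<in>e. (real (d2 w) - 1)\<^sup>2))"
    unfolding SO_def SO_red_def d1_def d2_def using E2eq by simp_all
  have keys: "sqrt (\<Sum>w\<in>e0'. (real (d2 w))\<^sup>2) + sqrt (\<Sum>w\<in>ev. (real (d2 w))\<^sup>2)
      < sqrt (\<Sum>w\<in>e0. (real (d1 w))\<^sup>2) + sqrt (\<Sum>w\<in>ev. (real (d1 w))\<^sup>2) \<and>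
     sqrt (\<Sum>w\<in>e0'. (real (d2 w) - 1)\<^sup>2) + sqrt (\<Sum>w\<in>ev. (real (d2 w) - 1)\<^sup>2)
      < sqrt (\<Sum>w\<in>e0. (real (d1 w) - 1)\<^sup>2) + sqrt (\<Sum>w\<in>ev. (real (d1 w) - 1)\<^sup>2)"
  proof (cases "l = 1")
    case True
    have evs: "(\<Sum>w\<in>ev. f (real (d1 w))) = f 1 + f (real (d1 x))"
      "(\<Sum>w\<in>ev. f (real (d2 w))) = f 2 + f (real (d1 x) - 1)" for f :: "real \<Rightarrow> real"
      unfolding ev_def using True neq d1vl d2vl rd2x by simp_all
    have A: "real (d1 (u 1)) \<ge> 1" "real (d1 x) \<ge> 3" using d1u1 d1x3 by auto
    show ?thesis
      using num_SO_1[OF A] num_red_1[of "real (d1 (u 1)) - 1" "real (d1 x)"] A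
        g1e0[of "\<lambda>n. (real n)\<^sup>2"] g2e0'[of "\<lambda>n. (real n)\<^sup>2"]
        g1e0[of "\<lambda>n. (real n - 1)\<^sup>2"] g2e0'[of "\<lambda>n. (real n - 1)\<^sup>2"]
        evs[of "\<lambda>r. r\<^sup>2"] evs[of "\<lambda>r. (r - 1)\<^sup>2"]
      by (simp add: algebra_simps)
  next
    case False
    have lm: "l - 1 \<in> {1..l}" "Suc (l - 1) = l" using False kl by auto
    define j where "j = l - 1"
    have j: "j \<in> {1..l}" "Suc j = l" "j < l" using lm unfolding j_def by auto
    have vimg: "v j \<in> v`{1..l}" using j(1) by (rule imageI)
    have vne': "v j \<noteq> v l" "v j \<noteq> u 1" "v j \<noteq> x"
    proof -
      show "v j \<noteq> v l" using inj_on_eq_iff[OF inj_v j(1) ill] j by simp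
      show "v j \<noteq> u 1" using uin[OF i1k] vimg by metis
      show "v j \<noteq> x" using vin[OF j(1)] x(1) by metis
    qed
    have d1p': "d1 (v j) = 2"
    proof -
      have a: "{e\<in>E0. v j\<in>e} = {}" using E0z vin[OF j(1)] by blast
      have b: "{e\<in>path_edges u k. v j\<in>e} = {}" using path_edges_notin[of "v j" u k] vin[OF j(1)] by blast
      have c: "{e\<in>path_edges v l. v j\<in>e} = (if 1 < j then {{v (j-1), v j}} else {}) \<union> {{v j, v l}}"
        using path_edges_at[OF inj_v j(1)] j by simp
      have vl2: "v l \<noteq> x" using neq by simp
      show ?thesis
      proof (cases "j = 1")
        case True
        have d: "{e\<in>{{u 1,x},{v 1,x}}. v j\<in>e} = {{v 1, x}}" using vne' True by auto
        show ?thesis unfolding d1_def degree_def N1 a b c d using True vl2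
          by (simp add: doubleton_eq_iff)
      next
        case False
        have "v j \<noteq> v 1" using False inj_on_eq_iff[OF inj_v j(1) i1l] by simp
        then have d: "{e\<in>{{u 1,x},{v 1,x}}. v j\<in>e} = {}" using vne' by auto
        have j1: "j - 1 \<in> {1..l}" using False j by auto
        have "v (j-1) \<noteq> v l" using inj_on_eq_iff[OF inj_v j1 ill] j by simp
        moreover have "v (j-1) \<noteq> v j" using inj_on_eq_iff[OF inj_v j1 j(1)] False j by simp
        ultimately show ?thesis unfolding d1_def degree_def N1 a b c d using False j
          by (simp add: doubleton_eq_iff)
      qed
    qed
    have d1p: "d1 (v (l-1)) = 2" and vne: "v (l-1) \<noteq> v l" "v (l-1) \<noteq> u 1" "v (l-1) \<noteq> x"
      using d1p' vne' unfolding j_def by auto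
    have d2p: "d2 (v (l-1)) = 2" using d2f[of "v (l-1)"] vne d1p unfolding e0_def e0'_def by simp
    have evs: "(\<Sum>w\<in>ev. f (real (d1 w))) = f 2 + f 1"
      "(\<Sum>w\<in>ev. f (real (d2 w))) = f 2 + f 2" for f :: "real \<Rightarrow> real"
      unfolding ev_def using False vne d1p d2p d1vl d2vl by simp_all
    have A: "real (d1 (u 1)) = 1 \<or> real (d1 (u 1)) = 2" "real (d1 x) \<ge> 3" using d1u d1x3 by auto
    have A': "real (d1 (u 1)) - 1 = 0 \<or> real (d1 (u 1)) - 1 = 1" using A by auto
    show ?thesis
      using num_SO_2[OF A] num_red_2[OF A' A(2)]
        g1e0[of "\<lambda>n. (real n)\<^sup>2"] g2e0'[of "\<lambda>n. (real n)\<^sup>2"]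
        g1e0[of "\<lambda>n. (real n - 1)\<^sup>2"] g2e0'[of "\<lambda>n. (real n - 1)\<^sup>2"]
        evs[of "\<lambda>r. r\<^sup>2"] evs[of "\<lambda>r. (r - 1)\<^sup>2"]
      by (simp add: algebra_simps)
  qed
  show ?thesis unfolding SOeq
    using switch_sum[OF finE1 e0E e0'E ev1(1) eve0 mono_SO] keys
      switch_sum[OF finE1 e0E e0'E ev1(1) eve0 mono_red] by simp
qed

end
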